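(* Let $d\ge 2$ and let $P_1,\dots,P_m$ be pumpkin graphs all of degree $d$, where $P_i$ has edge length $\ell_i>0$ (lengths may differ between different $P_i$). For a permutation $\sigma$ of $\{1,\dots,m\}$, let $C_\sigma$ be the chain $P_{\sigma(1)},P_{\sigma(2)},\dots,P_{\sigma(m)}$, i.e. the graph obtained by identifying the second vertex of $P_{\sigma(i)}$ with the first vertex of $P_{\sigma(i+1)}$ for $i=1,\dots,m-1$; its two end vertices are the first vertex $a_\sigma$ of $P_{\sigma(1)}$ and the second vertex $b_\sigma$ of $P_{\sigma(m)}$. Then: (i) the spectrum of $\mathbf{L}(C_\sigma)$ with standard vertex conditions does not depend on $\sigma$; (ii) more generally, for any compact metric graphs $G$, $H$ with chosen vertices $g\in G$, $h\in H$, the graph obtained from $C_\sigma$ by identifying $a_\sigma$ with $g$ and $b_\sigma$ with $h$ has spectrum independent of $\sigma$; and likewise for any compact graph $G$ with two chosen vertices $g_1,g_2$, the graph obtained by identifying $a_\sigma$ with $g_1$ and $b_\sigma$ with $g_2$ has spectrum independent of $\sigma$. In particular each end vertex of such a chain is a hot vertex.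
   Context: A pumpkin graph of degree $d$ with edge length $\ell$ consists of two vertices joined by $d$ parallel edges, each of length $\ell$ (a loop is regarded as a pumpkin graph of degree $2$, two vertices joined by two edges). On each edge the operator is $\mathbf{L}=-\frac{d^2}{dx^2}$ with standard (Neumann–Kirchhoff) vertex conditions: continuity at each vertex and vanishing sum of outward normal derivatives. Spectra are taken with multiplicities. A vertex of a graph (within a family of isospectral graphs) is called hot if attaching (by identifying one of its vertices with the hot vertex) the same arbitrary compact graph at that vertex in each member of the family yields isospectral graphs. *)

theory Defs
  imports "HOL-Analysis.Analysis" "HOL-Library.Extended_Nat"
begin

text \<open>A compact metric graph: finitely many vertices and edges; each edge e is
  identified with the interval [0, len e], the point 0 sitting at vertex src e
  and the point len e sitting at vertex tgt e (loops allowed, multiple edges allowed).\<close>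

record ('v, 'e) mgraph =
  verts :: "'v set"
  edges :: "'e set"
  src :: "'e \<Rightarrow> 'v"
  tgt :: "'e \<Rightarrow> 'v"
  len :: "'e \<Rightarrow> real"

definition wf_mgraph :: "('v, 'e) mgraph \<Rightarrow> bool" where
  "wf_mgraph G \<longleftrightarrow> finite (verts G) \<and> finite (edges G) \<and>
     (\<forall>e\<in>edges G. src G e \<in> verts G \<and> tgt G e \<in> verts G \<and> len G e > 0)"

text \<open>Eigenfunction (possibly zero) of L = -d^2/dx^2 with standard
  (continuity + Kirchhoff) vertex conditions, for the eigenvalue lam.
  The function on edge e is phi e, considered on [0, len e].\<close>

definition eigenfunction :: "('v, 'e) mgraph \<Rightarrow> real \<Rightarrow> ('e \<Rightarrow> real \<Rightarrow> real) \<Rightarrow> bool" where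
  "eigenfunction G lam phi \<longleftrightarrow>
     (\<forall>e\<in>edges G. \<exists>phi'.
        \<forall>x\<in>{0..len G e}.
          (phi e has_real_derivative phi' x) (at x within {0..len G e}) \<and>
          (phi' has_real_derivative (- lam * phi e x)) (at x within {0..len G e})) \<and>
     \<comment> \<open>continuity at each vertex\<close>
     (\<forall>v\<in>verts G. \<forall>e1\<in>edges G. \<forall>e2\<in>edges G. \<forall>x1 x2.
        ((src G e1 = v \<and> x1 = 0) \<or> (tgt G e1 = v \<and> x1 = len G e1)) \<longrightarrow>
        ((src G e2 = v \<and> x2 = 0) \<or> (tgt G e2 = v \<and> x2 = len G e2)) \<longrightarrow>
        phi e1 x1 = phi e2 x2) \<and>
     \<comment> \<open>Kirchhoff: the sum of outward normal derivatives vanishes\<close>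
     (\<forall>v\<in>verts G.
        (\<Sum>e\<in>{e\<in>edges G. src G e = v}. vector_derivative (phi e) (at 0 within {0..len G e}))
      - (\<Sum>e\<in>{e\<in>edges G. tgt G e = v}. vector_derivative (phi e) (at (len G e) within {0..len G e}))
      = 0)"

definition lin_indep_on :: "('v, 'e) mgraph \<Rightarrow> nat \<Rightarrow> (nat \<Rightarrow> 'e \<Rightarrow> real \<Rightarrow> real) \<Rightarrow> bool" where
  "lin_indep_on G n Phi \<longleftrightarrow>
     (\<forall>c :: nat \<Rightarrow> real.
        (\<forall>e\<in>edges G. \<forall>x\<in>{0..len G e}. (\<Sum>i<n. c i * Phi i e x) = 0) \<longrightarrow> (\<forall>i<n. c i = 0))"

text \<open>Multiplicity of lam: dimension of the eigenspace (0 if lam is not an eigenvalue).\<close>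

definition eig_mult :: "('v, 'e) mgraph \<Rightarrow> real \<Rightarrow> enat" where
  "eig_mult G lam = Sup {enat n | n. \<exists>Phi. (\<forall>i<n. eigenfunction G lam (Phi i)) \<and> lin_indep_on G n Phi}"

definition isospectral :: "('v, 'e) mgraph \<Rightarrow> ('w, 'f) mgraph \<Rightarrow> bool" where
  "isospectral G H \<longleftrightarrow> (\<forall>lam. eig_mult G lam = eig_mult H lam)"

text \<open>Vertices 0..m; the pumpkin in position i has d parallel edges (i,j), j<d,
  from vertex i to vertex i+1. End vertices: 0 and m.\<close>

definition pumpkin_chain :: "nat \<Rightarrow> (nat \<Rightarrow> real) \<Rightarrow> nat \<Rightarrow> (nat \<Rightarrow> nat) \<Rightarrow> (nat, nat \<times> nat) mgraph" where
  "pumpkin_chain d l m \<sigma> =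
     \<lparr> verts = {0..m}, edges = {(i, j). i < m \<and> j < d},
       src = (\<lambda>(i, j). i), tgt = (\<lambda>(i, j). Suc i), len = (\<lambda>(i, j). l (\<sigma> i)) \<rparr>"

definition glue_two :: "('v, 'e) mgraph \<Rightarrow> 'v \<Rightarrow> ('w, 'f) mgraph \<Rightarrow> 'w \<Rightarrow> nat \<Rightarrow>
    (nat, nat \<times> nat) mgraph \<Rightarrow> ('v + 'w + nat, 'e + 'f + nat \<times> nat) mgraph" where
  "glue_two G g H h m C =
     (let cv = (\<lambda>k. if k = 0 then Inl g else if k = m then Inr (Inl h) else Inr (Inr k)) in
     \<lparr> verts = Inl ` verts G \<union> (Inr \<circ> Inl) ` verts H \<union> cv ` verts C,
       edges = Inl ` edges G \<union> (Inr \<circ> Inl) ` edges H \<union> (Inr \<circ> Inr) ` edges C,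
       src = case_sum (\<lambda>e. Inl (src G e)) (case_sum (\<lambda>e. Inr (Inl (src H e))) (\<lambda>e. cv (src C e))),
       tgt = case_sum (\<lambda>e. Inl (tgt G e)) (case_sum (\<lambda>e. Inr (Inl (tgt H e))) (\<lambda>e. cv (tgt C e))),
       len = case_sum (len G) (case_sum (len H) (len C)) \<rparr>)"

definition glue_one :: "('v, 'e) mgraph \<Rightarrow> 'v \<Rightarrow> 'v \<Rightarrow> nat \<Rightarrow>
    (nat, nat \<times> nat) mgraph \<Rightarrow> ('v + nat, 'e + nat \<times> nat) mgraph" where
  "glue_one G g1 g2 m C =
     (let cv = (\<lambda>k. if k = 0 then Inl g1 else if k = m then Inl g2 else Inr k) in
     \<lparr> verts = Inl ` verts G \<union> cv ` verts C,
       edges = Inl ` edges G \<union> Inr ` edges C,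
       src = case_sum (\<lambda>e. Inl (src G e)) (\<lambda>e. cv (src C e)),
       tgt = case_sum (\<lambda>e. Inl (tgt G e)) (\<lambda>e. cv (tgt C e)),
       len = case_sum (len G) (len C) \<rparr>)"

end

theory Submission
  imports Defs
begin

definition cf :: "real \<Rightarrow> real \<Rightarrow> real" where
  "cf lam t = (if lam > 0 then cos (sqrt lam * t) else if lam = 0 then 1 else cosh (sqrt (- lam) * t))"
definition sf :: "real \<Rightarrow> real \<Rightarrow> real" where
  "sf lam t = (if lam > 0 then sin (sqrt lam * t) / sqrt lam else if lam = 0 then t
     else sinh (sqrt (- lam) * t) / sqrt (- lam))"

lemma cf0 [simp]: "cf lam 0 = 1" by (simp add: cf_def)
lemma sf0 [simp]: "sf lam 0 = 0" by (simp add: sf_def)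

lemma cf_deriv: "(cf lam has_real_derivative (- lam * sf lam t)) (at t)"
proof (cases "lam > 0")
  case True
  have e: "cf lam = (\<lambda>t. cos (sqrt lam * t))" using True by (auto simp: cf_def)
  have "((\<lambda>t. cos (sqrt lam * t)) has_real_derivative (- sin (sqrt lam * t) * sqrt lam)) (at t)"
    by (auto intro!: derivative_eq_intros)
  moreover have "- sin (sqrt lam * t) * sqrt lam = - lam * sf lam t"
  proof -
    have q: "sqrt lam > 0" using True by simp
    have s: "sqrt lam * sqrt lam = lam" using True by simp
    have "- lam * sf lam t = - (sqrt lam * sqrt lam) * (sin (sqrt lam * t) / sqrt lam)"
      unfolding s using True by (simp add: sf_def)
    also have "\<dots> = - sin (sqrt lam * t) * sqrt lam" using q by (simp add: field_simps)
    finally show ?thesis by simp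
  qed
  ultimately show ?thesis using e by simp
next
  case False
  show ?thesis
  proof (cases "lam = 0")
    case True
    then show ?thesis by (simp add: cf_def[abs_def])
  next
    case False
    with \<open>\<not> lam > 0\<close> have n: "lam < 0" by simp
    have e: "cf lam = (\<lambda>t. cosh (sqrt (- lam) * t))" using n by (auto simp: cf_def)
    have "((\<lambda>t. cosh (sqrt (- lam) * t)) has_real_derivative (sinh (sqrt (- lam) * t) * sqrt (- lam))) (at t)"
      by (auto intro!: derivative_eq_intros)
    moreover have "sinh (sqrt (- lam) * t) * sqrt (- lam) = - lam * sf lam t"
    proof -
      have q: "sqrt (- lam) > 0" using n by simp
      have s: "sqrt (- lam) * sqrt (- lam) = - lam" using n by simp
      have "- lam * sf lam t = (sqrt (- lam) * sqrt (- lam)) * (sinh (sqrt (- lam) * t) / sqrt (- lam))"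
        unfolding s using n by (simp add: sf_def)
      also have "\<dots> = sinh (sqrt (- lam) * t) * sqrt (- lam)" using q by (simp only: mult.assoc) simp
      finally show ?thesis by simp
    qed
    ultimately show ?thesis using e by simp
  qed
qed

lemma sf_deriv: "(sf lam has_real_derivative (cf lam t)) (at t)"
proof (cases "lam > 0")
  case True
  have e: "sf lam = (\<lambda>t. sin (sqrt lam * t) / sqrt lam)" using True by (auto simp: sf_def)
  have "((\<lambda>t. sin (sqrt lam * t) / sqrt lam) has_real_derivative (cos (sqrt lam * t) * sqrt lam / sqrt lam)) (at t)"
    by (rule DERIV_cdivide) (auto intro!: derivative_eq_intros)
  moreover have "cos (sqrt lam * t) * sqrt lam / sqrt lam = cf lam t" using True by (simp add: cf_def)
  ultimately show ?thesis using e by simp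
next
  case False
  show ?thesis
  proof (cases "lam = 0")
    case True
    then show ?thesis by (simp add: cf_def sf_def[abs_def])
  next
    case False
    with \<open>\<not> lam > 0\<close> have n: "lam < 0" by simp
    have e: "sf lam = (\<lambda>t. sinh (sqrt (- lam) * t) / sqrt (- lam))" using n by (auto simp: sf_def)
    have "((\<lambda>t. sinh (sqrt (- lam) * t) / sqrt (- lam)) has_real_derivative (cosh (sqrt (- lam) * t) * sqrt (- lam) / sqrt (- lam))) (at t)"
    by (rule DERIV_cdivide) (auto intro!: derivative_eq_intros)
    then show ?thesis using e n by (simp add: cf_def)
  qed
qed

lemma cs_pyth: "(cf lam t)^2 + lam * (sf lam t)^2 = 1"
proof -
  consider "lam > 0" | "lam = 0" | "lam < 0" by linarith
  then show ?thesis
  proof cases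
    case 1
    have "lam * (sin (sqrt lam * t) / sqrt lam)^2 = (sin (sqrt lam * t))^2"
      using 1 by (simp add: power_divide)
    then show ?thesis using 1 by (simp add: cf_def sf_def sin_cos_squared_add2)
  next
    case 2 then show ?thesis by (simp add: cf_def sf_def)
  next
    case 3
    have "lam * (sinh (sqrt (- lam) * t) / sqrt (- lam)) ^ 2 = - ((sinh (sqrt (- lam) * t)) ^ 2)"
      using 3 by (simp add: power_divide)
    then show ?thesis using 3 by (simp add: cf_def sf_def hyperbolic_pythagoras)
  qed
qed

lemma cf_deriv_within: "(cf lam has_real_derivative (- lam * sf lam t)) (at t within S)"
  using cf_deriv has_field_derivative_at_within by blast
lemma sf_deriv_within: "(sf lam has_real_derivative (cf lam t)) (at t within S)"
  using sf_deriv has_field_derivative_at_within by blast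

lemma ode_unique:
  fixes y y' :: "real \<Rightarrow> real" and L lam :: real
  assumes d: "\<forall>x\<in>{0..L}. (y has_real_derivative y' x) (at x within {0..L}) \<and>
                 (y' has_real_derivative (- lam * y x)) (at x within {0..L})"
    and "L \<ge> 0"
  shows "\<forall>x\<in>{0..L}. y x = y 0 * cf lam x + y' 0 * sf lam x \<and>
                      y' x = - lam * y 0 * sf lam x + y' 0 * cf lam x"
proof -
  define W1 where "W1 x = y x * cf lam x - y' x * sf lam x" for x
  define W2 where "W2 x = lam * y x * sf lam x + y' x * cf lam x" for x
  have "\<exists>c. \<forall>x\<in>{0..L}. W1 x = c"
  proof (rule has_field_derivative_zero_constant)
    fix x assume x: "x \<in> {0..L}"
    have "(W1 has_real_derivative
        (y' x * cf lam x + y x * (- lam * sf lam x) - ((- lam * y x) * sf lam x + y' x * cf lam x)))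
        (at x within {0..L})"
      unfolding W1_def[abs_def] using d x
      by (auto intro!: derivative_eq_intros cf_deriv_within sf_deriv_within)
    then show "(W1 has_real_derivative 0) (at x within {0..L})" by (simp add: algebra_simps)
  qed simp
  then obtain c1 where c1: "\<forall>x\<in>{0..L}. W1 x = c1" by blast
  have "\<exists>c. \<forall>x\<in>{0..L}. W2 x = c"
  proof (rule has_field_derivative_zero_constant)
    fix x assume x: "x \<in> {0..L}"
    have "(W2 has_real_derivative
        (lam * y' x * sf lam x + lam * y x * cf lam x + ((- lam * y x) * cf lam x + y' x * (- lam * sf lam x))))
        (at x within {0..L})"
      unfolding W2_def[abs_def] using d x
      by (auto intro!: derivative_eq_intros cf_deriv_within sf_deriv_within)
    then show "(W2 has_real_derivative 0) (at x within {0..L})" by (simp add: algebra_simps)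
  qed simp
  then obtain c2 where c2: "\<forall>x\<in>{0..L}. W2 x = c2" by blast
  have 0: "0 \<in> {0..L}" using assms by simp
  have e1: "c1 = y 0" using c1[rule_format, OF 0] by (auto simp: W1_def)
  have e2: "c2 = y' 0" using c2[rule_format, OF 0] by (auto simp: W2_def)
  show ?thesis
  proof
    fix x assume x: "x \<in> {0..L}"
    have w1: "y x * cf lam x - y' x * sf lam x = y 0" using c1 x e1 by (auto simp: W1_def)
    have w2: "lam * y x * sf lam x + y' x * cf lam x = y' 0" using c2 x e2 by (auto simp: W2_def)
    have p: "(cf lam x)^2 + lam * (sf lam x)^2 = 1" by (rule cs_pyth)
    have "y x = y x * ((cf lam x)^2 + lam * (sf lam x)^2)" using p by simp
    also have "\<dots> = cf lam x * (y x * cf lam x - y' x * sf lam x) + sf lam x * (lam * y x * sf lam x + y' x * cf lam x)"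
      by (simp add: algebra_simps power2_eq_square)
    also have "\<dots> = cf lam x * y 0 + sf lam x * y' 0" by (simp only: w1 w2)
    finally have a: "y x = y 0 * cf lam x + y' 0 * sf lam x" by (simp add: algebra_simps)
    have "y' x = y' x * ((cf lam x)^2 + lam * (sf lam x)^2)" using p by simp
    also have "\<dots> = - lam * sf lam x * (y x * cf lam x - y' x * sf lam x) + cf lam x * (lam * y x * sf lam x + y' x * cf lam x)"
      by (simp add: algebra_simps power2_eq_square)
    also have "\<dots> = - lam * sf lam x * y 0 + cf lam x * y' 0" by (simp only: w1 w2)
    finally have b: "y' x = - lam * y 0 * sf lam x + y' 0 * cf lam x" by (simp add: algebra_simps)
    show "y x = y 0 * cf lam x + y' 0 * sf lam x \<and> y' x = - lam * y 0 * sf lam x + y' 0 * cf lam x"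
      using a b by simp
  qed
qed


lemma W_shift1:
  "((\<lambda>x. a * cf lam (o' + x) + b * sf lam (o' + x)) has_real_derivative
     (- lam * a * sf lam (o' + x) + b * cf lam (o' + x))) (at x within S)"
proof -
  have g: "((\<lambda>x. o' + x) has_real_derivative 1) (at x within S)"
    by (auto intro!: derivative_eq_intros)
  have c: "((\<lambda>x. cf lam (o' + x)) has_real_derivative (- lam * sf lam (o' + x)) * 1) (at x within S)"
    by (rule DERIV_chain2[OF cf_deriv g])
  have s: "((\<lambda>x. sf lam (o' + x)) has_real_derivative (cf lam (o' + x)) * 1) (at x within S)"
    by (rule DERIV_chain2[OF sf_deriv g])
  show ?thesis using c s by (auto intro!: derivative_eq_intros)
qed

lemma W_shift2:
  "((\<lambda>x. - lam * a * sf lam (o' + x) + b * cf lam (o' + x)) has_real_derivative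
     (- lam * (a * cf lam (o' + x) + b * sf lam (o' + x)))) (at x within S)"
proof -
  have g: "((\<lambda>x. o' + x) has_real_derivative 1) (at x within S)"
    by (auto intro!: derivative_eq_intros)
  have c: "((\<lambda>x. cf lam (o' + x)) has_real_derivative (- lam * sf lam (o' + x)) * 1) (at x within S)"
    by (rule DERIV_chain2[OF cf_deriv g])
  have s: "((\<lambda>x. sf lam (o' + x)) has_real_derivative (cf lam (o' + x)) * 1) (at x within S)"
    by (rule DERIV_chain2[OF sf_deriv g])
  have "((\<lambda>x. - lam * a * sf lam (o' + x) + b * cf lam (o' + x)) has_real_derivative
     (- lam * a * (cf lam (o' + x) * 1) + b * (- lam * sf lam (o' + x) * 1))) (at x within S)"
    by (rule DERIV_add[OF DERIV_cmult[OF s] DERIV_cmult[OF c]])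
  then show ?thesis by (simp add: algebra_simps)
qed

lemma vd_eval:
  assumes "L > 0" "x \<in> {0..L}" "(f has_real_derivative f') (at x within {0..L})"
  shows "vector_derivative f (at x within {0..L}) = f'"
  using assms vector_derivative_within_closed_interval has_real_derivative_iff_has_vector_derivative
  by metis

definition Dv :: "('v, 'e) mgraph \<Rightarrow> real \<Rightarrow> ('e \<Rightarrow> real \<Rightarrow> real) \<Rightarrow> 'e \<Rightarrow> real \<Rightarrow> real" where
  "Dv G lam phi e = (SOME p. \<forall>x\<in>{0..len G e}.
        (phi e has_real_derivative p x) (at x within {0..len G e}) \<and>
        (p has_real_derivative (- lam * phi e x)) (at x within {0..len G e}))"

lemma Dv_spec:
  assumes "eigenfunction G lam phi" "e \<in> edges G"
  shows "\<forall>x\<in>{0..len G e}.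
        (phi e has_real_derivative Dv G lam phi e x) (at x within {0..len G e}) \<and>
        (Dv G lam phi e has_real_derivative (- lam * phi e x)) (at x within {0..len G e})"
proof -
  from assms have "\<exists>p. \<forall>x\<in>{0..len G e}.
        (phi e has_real_derivative p x) (at x within {0..len G e}) \<and>
        (p has_real_derivative (- lam * phi e x)) (at x within {0..len G e})"
    by (simp add: eigenfunction_def)
  then show ?thesis unfolding Dv_def by (rule someI_ex)
qed

lemma ef_cont:
  assumes "eigenfunction G lam phi" "v \<in> verts G" "e1 \<in> edges G" "e2 \<in> edges G"
    "(src G e1 = v \<and> x1 = 0) \<or> (tgt G e1 = v \<and> x1 = len G e1)"
    "(src G e2 = v \<and> x2 = 0) \<or> (tgt G e2 = v \<and> x2 = len G e2)"
  shows "phi e1 x1 = phi e2 x2"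
  using assms unfolding eigenfunction_def by blast

lemma ef_kirch:
  assumes "eigenfunction G lam phi" "v \<in> verts G"
  shows "(\<Sum>e\<in>{e\<in>edges G. src G e = v}. vector_derivative (phi e) (at 0 within {0..len G e}))
      - (\<Sum>e\<in>{e\<in>edges G. tgt G e = v}. vector_derivative (phi e) (at (len G e) within {0..len G e}))
      = 0"
  using assms unfolding eigenfunction_def by blast

locale chain_setup =
  fixes G1 G2 :: "('v, 'e) mgraph" and ce :: "nat \<times> nat \<Rightarrow> 'e" and cv :: "nat \<Rightarrow> 'v"
    and d m :: nat and l :: "nat \<Rightarrow> real" and \<sigma> \<tau> :: "nat \<Rightarrow> nat"
  assumes d_pos: "d \<ge> 1" and m_pos: "m \<ge> 1" and l_pos: "\<forall>i<m. l i > 0"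
    and sig: "\<sigma> permutes {..<m}" and tau: "\<tau> permutes {..<m}"
    and verts_eq: "verts G2 = verts G1" and edges_eq: "edges G2 = edges G1"
    and src_eq: "src G2 = src G1" and tgt_eq: "tgt G2 = tgt G1"
    and fin_edges: "finite (edges G1)"
    and ce_in: "\<And>i j. i < m \<Longrightarrow> j < d \<Longrightarrow> ce (i, j) \<in> edges G1"
    and ce_inj: "inj_on ce ({..<m} \<times> {..<d})"
    and ce_src: "\<And>i j. i < m \<Longrightarrow> j < d \<Longrightarrow> src G1 (ce (i, j)) = cv i"
    and ce_tgt: "\<And>i j. i < m \<Longrightarrow> j < d \<Longrightarrow> tgt G1 (ce (i, j)) = cv (Suc i)"
    and len1: "\<And>i j. i < m \<Longrightarrow> j < d \<Longrightarrow> len G1 (ce (i, j)) = l (\<sigma> i)"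
    and len2: "\<And>i j. i < m \<Longrightarrow> j < d \<Longrightarrow> len G2 (ce (i, j)) = l (\<tau> i)"
    and len_rest: "\<And>e. e \<in> edges G1 \<Longrightarrow> e \<notin> ce ` ({..<m} \<times> {..<d}) \<Longrightarrow> len G2 e = len G1 e"
    and cv_inj: "inj_on cv {0..m}"
    and rest_interior: "\<And>e k. e \<in> edges G1 \<Longrightarrow> e \<notin> ce ` ({..<m} \<times> {..<d}) \<Longrightarrow> 0 < k \<Longrightarrow> k < m \<Longrightarrow>
        src G1 e \<noteq> cv k \<and> tgt G1 e \<noteq> cv k"
    and cv_verts: "\<And>k. k \<le> m \<Longrightarrow> cv k \<in> verts G1"
begin

definition "CE0 = {..<m} \<times> {..<d}"
definition "CE = ce ` CE0"
definition "off1 r = (\<Sum>k<r. l (\<sigma> k))"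
definition "off2 p = (\<Sum>k<p. l (\<tau> k))"
definition "rp p = inv \<sigma> (\<tau> p)"
definition "mean phi r x = (\<Sum>j<d. phi (ce (r, j)) x) / real d"
definition "mean' lam phi r x = (\<Sum>j<d. Dv G1 lam phi (ce (r, j)) x) / real d"
definition "A0 phi = phi (ce (0, 0)) 0"
definition "B0 lam phi = mean' lam phi 0 0"
definition "Wf lam phi t = A0 phi * cf lam t + B0 lam phi * sf lam t"
definition "Wf' lam phi t = - lam * A0 phi * sf lam t + B0 lam phi * cf lam t"
definition "TD lam phi p j x = Dv G1 lam phi (ce (rp p, j)) x - mean' lam phi (rp p) x + Wf' lam phi (off2 p + x)"
definition "T lam phi e x = (if e \<in> CE then (case the_inv_into CE0 ce e of (p, j) \<Rightarrow>
    phi (ce (rp p, j)) x - mean phi (rp p) x + Wf lam phi (off2 p + x)) else phi e x)"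

lemma ce_eq: "i < m \<Longrightarrow> j < d \<Longrightarrow> i' < m \<Longrightarrow> j' < d \<Longrightarrow> ce (i, j) = ce (i', j') \<longleftrightarrow> i = i' \<and> j = j'"
proof
  assume a: "i < m" "j < d" "i' < m" "j' < d" "ce (i, j) = ce (i', j')"
  have "(i, j) = (i', j')" by (rule inj_onD[OF ce_inj a(5)]) (use a in auto)
  then show "i = i' \<and> j = j'" by simp
qed simp

lemma inv_ce: "p < m \<Longrightarrow> j < d \<Longrightarrow> the_inv_into CE0 ce (ce (p, j)) = (p, j)"
  unfolding CE0_def by (rule the_inv_into_f_f[OF ce_inj]) simp

lemma ce_CE: "p < m \<Longrightarrow> j < d \<Longrightarrow> ce (p, j) \<in> CE"
  unfolding CE_def CE0_def by simp

lemma T_ce: "p < m \<Longrightarrow> j < d \<Longrightarrow>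
  T lam phi (ce (p, j)) = (\<lambda>x. phi (ce (rp p, j)) x - mean phi (rp p) x + Wf lam phi (off2 p + x))"
  unfolding T_def[abs_def] by (simp only: ce_CE inv_ce if_True prod.case)

lemma T_rest: "e \<notin> CE \<Longrightarrow> T lam phi e = phi e"
  by (auto simp: T_def intro!: ext)

lemma rp_lt: "p < m \<Longrightarrow> rp p < m"
  unfolding rp_def using sig tau
  by (metis lessThan_iff permutes_in_image permutes_inv)

lemma sig_rp: "\<sigma> (rp p) = \<tau> p"
  unfolding rp_def using sig permutes_inverses(1) by metis

lemma rp_surj: "r < m \<Longrightarrow> rp (inv \<tau> (\<sigma> r)) = r \<and> inv \<tau> (\<sigma> r) < m"
  unfolding rp_def using sig tau
  by (metis lessThan_iff permutes_in_image permutes_inv permutes_inverses(1) permutes_inverses(2))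

lemma sig_lt: "i < m \<Longrightarrow> \<sigma> i < m" using permutes_in_image[OF sig, of i] by simp
lemma tau_lt: "i < m \<Longrightarrow> \<tau> i < m" using permutes_in_image[OF tau, of i] by simp
lemma l1_pos: "i < m \<Longrightarrow> l (\<sigma> i) > 0" using sig_lt l_pos by blast
lemma l2_pos: "i < m \<Longrightarrow> l (\<tau> i) > 0" using tau_lt l_pos by blast

lemma off1_Suc: "off1 (Suc r) = off1 r + l (\<sigma> r)" by (simp add: off1_def)
lemma off2_Suc: "off2 (Suc r) = off2 r + l (\<tau> r)" by (simp add: off2_def)
lemma off_0: "off1 0 = 0" "off2 0 = 0" by (simp_all add: off1_def off2_def)
lemma off_m: "off1 m = off2 m"
proof -
  have "off1 m = (\<Sum>k<m. l k)" unfolding off1_def using sum.permute[OF sig, of l] by (simp add: comp_def)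
  moreover have "off2 m = (\<Sum>k<m. l k)" unfolding off2_def using sum.permute[OF tau, of l] by (simp add: comp_def)
  ultimately show ?thesis by simp
qed

lemma CE_sub: "CE \<subseteq> edges G1" using ce_in by (auto simp: CE_def CE0_def)

lemma cv_eq: "i \<le> m \<Longrightarrow> k \<le> m \<Longrightarrow> cv i = cv k \<longleftrightarrow> i = k"
  using cv_inj by (auto dest: inj_onD)


lemma inj_row: "i < m \<Longrightarrow> inj_on (\<lambda>j. ce (i, j)) {..<d}"
  by (auto simp: inj_on_def ce_eq)

lemma csrc: "{e \<in> CE. src G1 e = cv k} = (\<lambda>j. ce (k, j)) ` {..<d}" if "k < m"
proof
  show "{e \<in> CE. src G1 e = cv k} \<subseteq> (\<lambda>j. ce (k, j)) ` {..<d}"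
  proof
    fix e assume "e \<in> {e \<in> CE. src G1 e = cv k}"
    then obtain i j where e: "e = ce (i, j)" "i < m" "j < d" "cv i = cv k"
      by (auto simp: CE_def CE0_def ce_src)
    then have "i = k" using cv_eq[of i k] that by simp
    then show "e \<in> (\<lambda>j. ce (k, j)) ` {..<d}" using e by auto
  qed
  show "(\<lambda>j. ce (k, j)) ` {..<d} \<subseteq> {e \<in> CE. src G1 e = cv k}"
    using that by (auto simp: CE_def CE0_def ce_src)
qed
lemma csrc_none: "(\<forall>k<m. v \<noteq> cv k) \<Longrightarrow> {e \<in> CE. src G1 e = v} = {}"
  by (auto simp: CE_def CE0_def ce_src)
lemma ctgt: "{e \<in> CE. tgt G1 e = cv k} = (\<lambda>j. ce (k - 1, j)) ` {..<d}" if "0 < k" "k \<le> m"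
proof
  show "{e \<in> CE. tgt G1 e = cv k} \<subseteq> (\<lambda>j. ce (k - 1, j)) ` {..<d}"
  proof
    fix e assume "e \<in> {e \<in> CE. tgt G1 e = cv k}"
    then obtain i j where e: "e = ce (i, j)" "i < m" "j < d" "cv (Suc i) = cv k"
      by (auto simp: CE_def CE0_def ce_tgt)
    then have "Suc i = k" using cv_eq[of "Suc i" k] that by simp
    then show "e \<in> (\<lambda>j. ce (k - 1, j)) ` {..<d}" using e by auto
  qed
  show "(\<lambda>j. ce (k - 1, j)) ` {..<d} \<subseteq> {e \<in> CE. tgt G1 e = cv k}"
    using that by (auto simp: CE_def CE0_def ce_tgt)
qed
lemma ctgt_none: "(\<forall>k. 0 < k \<longrightarrow> k \<le> m \<longrightarrow> v \<noteq> cv k) \<Longrightarrow> {e \<in> CE. tgt G1 e = v} = {}"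
  apply (auto simp: CE_def CE0_def ce_tgt)
  by (metis Suc_leI zero_less_Suc)

lemma esrc_int: "0 < k \<Longrightarrow> k < m \<Longrightarrow> {e \<in> edges G1. src G1 e = cv k} = (\<lambda>j. ce (k, j)) ` {..<d}"
proof -
  assume k: "0 < k" "k < m"
  have "{e \<in> edges G1. src G1 e = cv k} = {e \<in> CE. src G1 e = cv k}"
    using rest_interior[of _ k] k CE_sub unfolding CE_def CE0_def by blast
  then show ?thesis using csrc k by simp
qed

lemma etgt_int: "0 < k \<Longrightarrow> k < m \<Longrightarrow> {e \<in> edges G1. tgt G1 e = cv k} = (\<lambda>j. ce (k - 1, j)) ` {..<d}"
proof -
  assume k: "0 < k" "k < m"
  have "{e \<in> edges G1. tgt G1 e = cv k} = {e \<in> CE. tgt G1 e = cv k}"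
    using rest_interior[of _ k] k CE_sub unfolding CE_def CE0_def by blast
  then show ?thesis using ctgt k by simp
qed

lemma d_real_pos: "real d > 0" using d_pos by simp

lemma mean_const:
  assumes "\<And>j. j < d \<Longrightarrow> phi (ce (r, j)) x = c"
  shows "mean phi r x = c"
proof -
  have "(\<Sum>j<d. phi (ce (r, j)) x) = (\<Sum>j<d. c)" using assms by simp
  then show ?thesis using d_real_pos by (simp add: mean_def)
qed

lemma sum_dev_zero: "(\<Sum>j<d. phi (ce (r, j)) x - mean phi r x) = 0"
  using d_real_pos by (simp add: sum_subtractf mean_def)

context
  fixes lam :: real and phi :: "'e \<Rightarrow> real \<Rightarrow> real"
  assumes ef: "eigenfunction G1 lam phi"
begin

lemma D_ce:
  assumes "r < m" "j < d" "x \<in> {0..l (\<sigma> r)}"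
  shows "(phi (ce (r, j)) has_real_derivative Dv G1 lam phi (ce (r, j)) x) (at x within {0..l (\<sigma> r)})"
    "(Dv G1 lam phi (ce (r, j)) has_real_derivative (- lam * phi (ce (r, j)) x)) (at x within {0..l (\<sigma> r)})"
  using Dv_spec[OF ef ce_in[OF assms(1,2)]] assms len1[OF assms(1,2)] by auto

lemma mean_deriv:
  assumes "r < m" "x \<in> {0..l (\<sigma> r)}"
  shows "(mean phi r has_real_derivative mean' lam phi r x) (at x within {0..l (\<sigma> r)})"
    "(mean' lam phi r has_real_derivative (- lam * mean phi r x)) (at x within {0..l (\<sigma> r)})"
proof -
  have "((\<lambda>x. (\<Sum>j<d. phi (ce (r, j)) x) / real d) has_real_derivative
      (\<Sum>j<d. Dv G1 lam phi (ce (r, j)) x) / real d) (at x within {0..l (\<sigma> r)})"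
    by (intro DERIV_cdivide DERIV_sum D_ce assms) (use assms in auto)
  then show "(mean phi r has_real_derivative mean' lam phi r x) (at x within {0..l (\<sigma> r)})"
    unfolding mean_def[abs_def] mean'_def by simp
  have "((\<lambda>x. (\<Sum>j<d. Dv G1 lam phi (ce (r, j)) x) / real d) has_real_derivative
      (\<Sum>j<d. - lam * phi (ce (r, j)) x) / real d) (at x within {0..l (\<sigma> r)})"
    by (intro DERIV_cdivide DERIV_sum D_ce assms) (use assms in auto)
  moreover have "(\<Sum>j<d. - lam * phi (ce (r, j)) x) / real d = - lam * mean phi r x"
    by (simp add: mean_def sum_negf sum_distrib_left[symmetric])
  ultimately show "(mean' lam phi r has_real_derivative (- lam * mean phi r x)) (at x within {0..l (\<sigma> r)})"
    unfolding mean'_def[abs_def] by simp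
qed

lemma val_src: "r < m \<Longrightarrow> j < d \<Longrightarrow> phi (ce (r, j)) 0 = phi (ce (r, 0)) 0"
  by (rule ef_cont[OF ef cv_verts[of r] ce_in ce_in]) (use d_pos in \<open>auto simp: ce_src\<close>)

lemma val_tgt: "r < m \<Longrightarrow> j < d \<Longrightarrow> phi (ce (r, j)) (l (\<sigma> r)) = phi (ce (r, 0)) (l (\<sigma> r))"
  by (rule ef_cont[OF ef cv_verts[of "Suc r"] ce_in ce_in]) (use d_pos in \<open>auto simp: ce_tgt len1\<close>)

lemma val_link: "Suc r < m \<Longrightarrow> phi (ce (Suc r, 0)) 0 = phi (ce (r, 0)) (l (\<sigma> r))"
  by (rule ef_cont[OF ef cv_verts[of "Suc r"] ce_in ce_in]) (use d_pos in \<open>auto simp: ce_tgt ce_src len1\<close>)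

lemma mean_src: "r < m \<Longrightarrow> mean phi r 0 = phi (ce (r, 0)) 0"
  by (rule mean_const) (rule val_src)

lemma mean_tgt: "r < m \<Longrightarrow> mean phi r (l (\<sigma> r)) = phi (ce (r, 0)) (l (\<sigma> r))"
  by (rule mean_const) (rule val_tgt)

lemma vd_ce0: "r < m \<Longrightarrow> j < d \<Longrightarrow>
   vector_derivative (phi (ce (r, j))) (at 0 within {0..len G1 (ce (r, j))}) = Dv G1 lam phi (ce (r, j)) 0"
  using vd_eval[OF l1_pos, of r 0] D_ce(1)[of r j 0] len1 l1_pos[of r] by auto

lemma vd_ce1: "r < m \<Longrightarrow> j < d \<Longrightarrow>
   vector_derivative (phi (ce (r, j))) (at (len G1 (ce (r, j))) within {0..len G1 (ce (r, j))})
     = Dv G1 lam phi (ce (r, j)) (l (\<sigma> r))"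
  using vd_eval[OF l1_pos, of r "l (\<sigma> r)"] D_ce(1)[of r j "l (\<sigma> r)"] len1 l1_pos[of r] by auto

lemma kirch_link: "Suc r < m \<Longrightarrow> mean' lam phi (Suc r) 0 = mean' lam phi r (l (\<sigma> r))"
proof -
  assume r: "Suc r < m"
  have K: "(\<Sum>e\<in>{e\<in>edges G1. src G1 e = cv (Suc r)}. vector_derivative (phi e) (at 0 within {0..len G1 e}))
      - (\<Sum>e\<in>{e\<in>edges G1. tgt G1 e = cv (Suc r)}. vector_derivative (phi e) (at (len G1 e) within {0..len G1 e}))
      = 0" using ef_kirch[OF ef cv_verts[of "Suc r"]] r by simp
  have s1: "(\<Sum>e\<in>{e\<in>edges G1. src G1 e = cv (Suc r)}. vector_derivative (phi e) (at 0 within {0..len G1 e}))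
      = (\<Sum>j<d. Dv G1 lam phi (ce (Suc r, j)) 0)"
  proof -
    have "{e\<in>edges G1. src G1 e = cv (Suc r)} = (\<lambda>j. ce (Suc r, j)) ` {..<d}"
      using r by (intro esrc_int) auto
    then have "(\<Sum>e\<in>{e\<in>edges G1. src G1 e = cv (Suc r)}. vector_derivative (phi e) (at 0 within {0..len G1 e}))
       = (\<Sum>j<d. vector_derivative (phi (ce (Suc r, j))) (at 0 within {0..len G1 (ce (Suc r, j))}))"
      using sum.reindex[OF inj_row[of "Suc r"], of "\<lambda>e. vector_derivative (phi e) (at 0 within {0..len G1 e})"] r
      by (simp add: o_def)
    also have "\<dots> = (\<Sum>j<d. Dv G1 lam phi (ce (Suc r, j)) 0)"
      using r by (intro sum.cong refl vd_ce0) auto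
    finally show ?thesis .
  qed
  have s2: "(\<Sum>e\<in>{e\<in>edges G1. tgt G1 e = cv (Suc r)}. vector_derivative (phi e) (at (len G1 e) within {0..len G1 e}))
      = (\<Sum>j<d. Dv G1 lam phi (ce (r, j)) (l (\<sigma> r)))"
  proof -
    have "{e\<in>edges G1. tgt G1 e = cv (Suc r)} = (\<lambda>j. ce (r, j)) ` {..<d}"
      using r etgt_int[of "Suc r"] by simp
    then have "(\<Sum>e\<in>{e\<in>edges G1. tgt G1 e = cv (Suc r)}. vector_derivative (phi e) (at (len G1 e) within {0..len G1 e}))
       = (\<Sum>j<d. vector_derivative (phi (ce (r, j))) (at (len G1 (ce (r, j))) within {0..len G1 (ce (r, j))}))"
      using sum.reindex[OF inj_row[of r], of "\<lambda>e. vector_derivative (phi e) (at (len G1 e) within {0..len G1 e})"] r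
      by (simp add: o_def)
    also have "\<dots> = (\<Sum>j<d. Dv G1 lam phi (ce (r, j)) (l (\<sigma> r)))"
      using r by (intro sum.cong refl vd_ce1) auto
    finally show ?thesis .
  qed
  have "(\<Sum>j<d. Dv G1 lam phi (ce (Suc r, j)) 0) = (\<Sum>j<d. Dv G1 lam phi (ce (r, j)) (l (\<sigma> r)))"
    using K unfolding s1 s2 by (rule eq_iff_diff_eq_0[THEN iffD2])
  then show ?thesis unfolding mean'_def by (rule arg_cong[where f="\<lambda>z. z / real d"])
qed

lemma Wf_0: "Wf lam phi 0 = A0 phi" "Wf' lam phi 0 = B0 lam phi"
  by (simp_all add: Wf_def Wf'_def)

lemma mean_W_step:
  assumes r: "r < m" and i0: "mean phi r 0 = Wf lam phi (off1 r)" and i1: "mean' lam phi r 0 = Wf' lam phi (off1 r)"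
  shows "\<forall>x\<in>{0..l (\<sigma> r)}. mean phi r x = Wf lam phi (off1 r + x) \<and> mean' lam phi r x = Wf' lam phi (off1 r + x)"
proof -
  define y where "y x = mean phi r x - Wf lam phi (off1 r + x)" for x
  define y' where "y' x = mean' lam phi r x - Wf' lam phi (off1 r + x)" for x
  have DD: "\<forall>x\<in>{0..l (\<sigma> r)}. (y has_real_derivative y' x) (at x within {0..l (\<sigma> r)}) \<and>
                 (y' has_real_derivative (- lam * y x)) (at x within {0..l (\<sigma> r)})"
  proof
    fix x assume x: "x \<in> {0..l (\<sigma> r)}"
    have a: "((\<lambda>x. Wf lam phi (off1 r + x)) has_real_derivative Wf' lam phi (off1 r + x)) (at x within {0..l (\<sigma> r)})"
      unfolding Wf_def Wf'_def by (rule W_shift1)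
    have b: "((\<lambda>x. Wf' lam phi (off1 r + x)) has_real_derivative (- lam * Wf lam phi (off1 r + x))) (at x within {0..l (\<sigma> r)})"
      unfolding Wf_def Wf'_def by (rule W_shift2)
    have 1: "(y has_real_derivative y' x) (at x within {0..l (\<sigma> r)})"
      unfolding y_def[abs_def] y'_def by (rule DERIV_diff[OF mean_deriv(1)[OF r x] a])
    have 2: "(y' has_real_derivative (- lam * mean phi r x - (- lam * Wf lam phi (off1 r + x)))) (at x within {0..l (\<sigma> r)})"
      unfolding y'_def[abs_def] by (rule DERIV_diff[OF mean_deriv(2)[OF r x] b])
    have eq: "- lam * y x = - lam * mean phi r x - (- lam * Wf lam phi (off1 r + x))"
      unfolding y_def by (simp only: right_diff_distrib)
    show "(y has_real_derivative y' x) (at x within {0..l (\<sigma> r)}) \<and>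
                 (y' has_real_derivative (- lam * y x)) (at x within {0..l (\<sigma> r)})"
      unfolding eq using 1 2 by (rule conjI)
  qed
  have L0: "l (\<sigma> r) \<ge> 0" using l1_pos[OF r] by simp
  have U: "\<forall>x\<in>{0..l (\<sigma> r)}. y x = y 0 * cf lam x + y' 0 * sf lam x \<and>
                      y' x = - lam * y 0 * sf lam x + y' 0 * cf lam x"
    by (rule ode_unique[OF DD L0])
  have z: "y 0 = 0" "y' 0 = 0" using i0 i1 by (simp_all add: y_def y'_def)
  show ?thesis
  proof
    fix x assume x: "x \<in> {0..l (\<sigma> r)}"
    from U x z have "y x = 0" "y' x = 0" by auto
    then show "mean phi r x = Wf lam phi (off1 r + x) \<and> mean' lam phi r x = Wf' lam phi (off1 r + x)"
      unfolding y_def y'_def by simp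
  qed
qed

lemma mean_W:
  "r < m \<Longrightarrow> \<forall>x\<in>{0..l (\<sigma> r)}. mean phi r x = Wf lam phi (off1 r + x) \<and> mean' lam phi r x = Wf' lam phi (off1 r + x)"
proof (induction r)
  case 0
  show ?case
  proof (rule mean_W_step[OF 0])
    show "mean phi 0 0 = Wf lam phi (off1 0)" using mean_src[OF 0] by (simp add: off_0 Wf_0 A0_def)
    show "mean' lam phi 0 0 = Wf' lam phi (off1 0)" by (simp add: off_0 Wf_0 B0_def)
  qed
next
  case (Suc r)
  then have r: "r < m" by simp
  have l0: "l (\<sigma> r) \<in> {0..l (\<sigma> r)}" using l1_pos[OF r] by simp
  from Suc.IH[OF r] l0 have h: "mean phi r (l (\<sigma> r)) = Wf lam phi (off1 r + l (\<sigma> r))"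
     "mean' lam phi r (l (\<sigma> r)) = Wf' lam phi (off1 r + l (\<sigma> r))" by auto
  show ?case
  proof (rule mean_W_step[OF Suc.prems])
    show "mean phi (Suc r) 0 = Wf lam phi (off1 (Suc r))"
    proof -
      have "mean phi (Suc r) 0 = phi (ce (Suc r, 0)) 0" by (rule mean_src[OF Suc.prems])
      also have "\<dots> = phi (ce (r, 0)) (l (\<sigma> r))" by (rule val_link[OF Suc.prems])
      also have "\<dots> = mean phi r (l (\<sigma> r))" by (rule mean_tgt[OF r, symmetric])
      also have "\<dots> = Wf lam phi (off1 (Suc r))" unfolding h(1) off1_Suc ..
      finally show ?thesis .
    qed
    show "mean' lam phi (Suc r) 0 = Wf' lam phi (off1 (Suc r))"
      unfolding kirch_link[OF Suc.prems] h(2) off1_Suc ..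
  qed
qed

lemma V1: "r < m \<Longrightarrow> j < d \<Longrightarrow> phi (ce (r, j)) 0 = Wf lam phi (off1 r)"
proof -
  assume r: "r < m" and j: "j < d"
  have "0 \<in> {0..l (\<sigma> r)}" using l1_pos[OF r] by simp
  then have "mean phi r 0 = Wf lam phi (off1 r + 0)" using mean_W[OF r] by blast
  then have "mean phi r 0 = Wf lam phi (off1 r)" by simp
  then show ?thesis unfolding val_src[OF r j] mean_src[OF r, symmetric] .
qed

lemma V1': "r < m \<Longrightarrow> j < d \<Longrightarrow> phi (ce (r, j)) (l (\<sigma> r)) = Wf lam phi (off1 (Suc r))"
proof -
  assume r: "r < m" and j: "j < d"
  have "l (\<sigma> r) \<in> {0..l (\<sigma> r)}" using l1_pos[OF r] by simp
  then have "mean phi r (l (\<sigma> r)) = Wf lam phi (off1 r + l (\<sigma> r))" using mean_W[OF r] by blast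
  then have "mean phi r (l (\<sigma> r)) = Wf lam phi (off1 (Suc r))" unfolding off1_Suc .
  then show ?thesis unfolding val_tgt[OF r j] mean_tgt[OF r, symmetric] .
qed


lemma l_rp: "l (\<tau> p) = l (\<sigma> (rp p))" by (simp add: sig_rp)

lemma T_deriv:
  assumes p: "p < m" and j: "j < d" and x: "x \<in> {0..l (\<tau> p)}"
  shows "(T lam phi (ce (p, j)) has_real_derivative TD lam phi p j x) (at x within {0..l (\<tau> p)})"
    "(TD lam phi p j has_real_derivative (- lam * T lam phi (ce (p, j)) x)) (at x within {0..l (\<tau> p)})"
proof -
  define r where "r = rp p"
  have r: "r < m" using rp_lt[OF p] by (simp add: r_def)
  have L: "l (\<tau> p) = l (\<sigma> r)" by (simp add: r_def l_rp)
  have x': "x \<in> {0..l (\<sigma> r)}" using x L by simp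
  have a: "((\<lambda>x. Wf lam phi (off2 p + x)) has_real_derivative Wf' lam phi (off2 p + x)) (at x within {0..l (\<sigma> r)})"
    unfolding Wf_def Wf'_def by (rule W_shift1)
  have b: "((\<lambda>x. Wf' lam phi (off2 p + x)) has_real_derivative (- lam * Wf lam phi (off2 p + x))) (at x within {0..l (\<sigma> r)})"
    unfolding Wf_def Wf'_def by (rule W_shift2)
  have 1: "((\<lambda>x. phi (ce (r, j)) x - mean phi r x + Wf lam phi (off2 p + x)) has_real_derivative
      (Dv G1 lam phi (ce (r, j)) x - mean' lam phi r x + Wf' lam phi (off2 p + x))) (at x within {0..l (\<sigma> r)})"
    by (rule DERIV_add[OF DERIV_diff[OF D_ce(1)[OF r j x'] mean_deriv(1)[OF r x']] a])
  have 2: "((\<lambda>x. Dv G1 lam phi (ce (r, j)) x - mean' lam phi r x + Wf' lam phi (off2 p + x)) has_real_derivative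
      (- lam * phi (ce (r, j)) x - (- lam * mean phi r x) + (- lam * Wf lam phi (off2 p + x)))) (at x within {0..l (\<sigma> r)})"
    by (rule DERIV_add[OF DERIV_diff[OF D_ce(2)[OF r j x'] mean_deriv(2)[OF r x']] b])
  have eq: "- lam * phi (ce (r, j)) x - (- lam * mean phi r x) + (- lam * Wf lam phi (off2 p + x))
     = - lam * (phi (ce (r, j)) x - mean phi r x + Wf lam phi (off2 p + x))"
    by (simp only: distrib_left right_diff_distrib)
  show "(T lam phi (ce (p, j)) has_real_derivative TD lam phi p j x) (at x within {0..l (\<tau> p)})"
    unfolding T_ce[OF p j] TD_def L using 1 by (simp only: r_def)
  show "(TD lam phi p j has_real_derivative (- lam * T lam phi (ce (p, j)) x)) (at x within {0..l (\<tau> p)})"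
    unfolding T_ce[OF p j] TD_def[abs_def] L using 2 unfolding eq by (simp only: r_def)
qed

lemma T_ode: "e \<in> edges G2 \<Longrightarrow> \<exists>phi'. \<forall>x\<in>{0..len G2 e}.
          (T lam phi e has_real_derivative phi' x) (at x within {0..len G2 e}) \<and>
          (phi' has_real_derivative (- lam * T lam phi e x)) (at x within {0..len G2 e})"
proof -
  assume e: "e \<in> edges G2"
  show ?thesis
  proof (cases "e \<in> CE")
    case True
    then obtain p j where pj: "p < m" "j < d" "e = ce (p, j)" by (auto simp: CE_def CE0_def)
    show ?thesis
      by (rule exI[of _ "TD lam phi p j"]) (use T_deriv[OF pj(1,2)] pj len2 in auto)
  next
    case False
    have e1: "e \<in> edges G1" using e edges_eq by simp
    have "len G2 e = len G1 e" using len_rest[OF e1] False by (simp add: CE_def CE0_def)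
    then show ?thesis
      using Dv_spec[OF ef e1] T_rest[OF False] by metis
  qed
qed

lemma V2: "p < m \<Longrightarrow> j < d \<Longrightarrow> T lam phi (ce (p, j)) 0 = Wf lam phi (off2 p)"
proof -
  assume p: "p < m" and j: "j < d"
  have r: "rp p < m" by (rule rp_lt[OF p])
  have "phi (ce (rp p, j)) 0 = mean phi (rp p) 0" using val_src[OF r j] mean_src[OF r] by simp
  then show ?thesis unfolding T_ce[OF p j] by simp
qed

lemma V2': "p < m \<Longrightarrow> j < d \<Longrightarrow> T lam phi (ce (p, j)) (l (\<tau> p)) = Wf lam phi (off2 (Suc p))"
proof -
  assume p: "p < m" and j: "j < d"
  have r: "rp p < m" by (rule rp_lt[OF p])
  have "phi (ce (rp p, j)) (l (\<tau> p)) = mean phi (rp p) (l (\<tau> p))"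
    using val_tgt[OF r j] mean_tgt[OF r] by (simp add: l_rp)
  then show ?thesis unfolding T_ce[OF p j] by (simp add: off2_Suc)
qed

lemma chain_end2:
  assumes "e \<in> CE" "(src G1 e = v \<and> x = 0) \<or> (tgt G1 e = v \<and> x = len G2 e)"
  shows "\<exists>k\<le>m. v = cv k \<and> T lam phi e x = Wf lam phi (off2 k)"
proof -
  obtain p j where pj: "p < m" "j < d" "e = ce (p, j)" using assms(1) by (auto simp: CE_def CE0_def)
  show ?thesis
  proof (cases "src G1 e = v \<and> x = 0")
    case True
    then show ?thesis using pj V2[OF pj(1,2)] ce_src[OF pj(1,2)] by (intro exI[of _ p]) auto
  next
    case False
    then have "tgt G1 e = v \<and> x = l (\<tau> p)" using assms(2) pj len2 by auto
    then show ?thesis using pj V2'[OF pj(1,2)] ce_tgt[OF pj(1,2)] by (intro exI[of _ "Suc p"]) auto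
  qed
qed

lemma chain_end1:
  assumes "e \<in> CE" "(src G1 e = v \<and> x = 0) \<or> (tgt G1 e = v \<and> x = len G1 e)"
  shows "\<exists>k\<le>m. v = cv k \<and> phi e x = Wf lam phi (off1 k)"
proof -
  obtain p j where pj: "p < m" "j < d" "e = ce (p, j)" using assms(1) by (auto simp: CE_def CE0_def)
  show ?thesis
  proof (cases "src G1 e = v \<and> x = 0")
    case True
    then show ?thesis using pj V1[OF pj(1,2)] ce_src[OF pj(1,2)] by (intro exI[of _ p]) auto
  next
    case False
    then have "tgt G1 e = v \<and> x = l (\<sigma> p)" using assms(2) pj len1 by auto
    then show ?thesis using pj V1'[OF pj(1,2)] ce_tgt[OF pj(1,2)] by (intro exI[of _ "Suc p"]) auto
  qed
qed

lemma witness_end: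
  assumes "k = 0 \<or> k = m"
  shows "\<exists>e' x'. e' \<in> edges G1 \<and> ((src G1 e' = cv k \<and> x' = 0) \<or> (tgt G1 e' = cv k \<and> x' = len G1 e'))
     \<and> phi e' x' = Wf lam phi (off1 k)"
proof (cases "k = 0")
  case True
  have "0 < m" "0 < d" using m_pos d_pos by auto
  then show ?thesis using True V1[of 0 0] ce_src[of 0 0] ce_in[of 0 0]
    by (intro exI[of _ "ce (0, 0)"] exI[of _ 0]) auto
next
  case False
  then have k: "k = m" using assms by simp
  have "m - 1 < m" "0 < d" "Suc (m - 1) = m" using m_pos d_pos by auto
  then show ?thesis using k V1'[of "m - 1" 0] ce_tgt[of "m - 1" 0] ce_in[of "m - 1" 0] len1[of "m - 1" 0]
    by (intro exI[of _ "ce (m - 1, 0)"] exI[of _ "l (\<sigma> (m - 1))"]) auto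
qed

lemma cont_mixed:
  assumes v: "v \<in> verts G1" and e1: "e1 \<in> CE" and e2: "e2 \<in> edges G1" "e2 \<notin> CE"
    and c1: "(src G1 e1 = v \<and> x1 = 0) \<or> (tgt G1 e1 = v \<and> x1 = len G2 e1)"
    and c2: "(src G1 e2 = v \<and> x2 = 0) \<or> (tgt G1 e2 = v \<and> x2 = len G2 e2)"
  shows "T lam phi e1 x1 = T lam phi e2 x2"
proof -
  obtain k where k: "k \<le> m" "v = cv k" "T lam phi e1 x1 = Wf lam phi (off2 k)"
    using chain_end2[OF e1 c1] by blast
  have l2: "len G2 e2 = len G1 e2" using len_rest[OF e2(1)] e2(2) by (simp add: CE_def CE0_def)
  have c2': "(src G1 e2 = v \<and> x2 = 0) \<or> (tgt G1 e2 = v \<and> x2 = len G1 e2)" using c2 l2 by simp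
  have "\<not> (0 < k \<and> k < m)"
    using rest_interior[OF e2(1), of k] e2(2) c2' k(2) by (auto simp: CE_def CE0_def)
  then have kk: "k = 0 \<or> k = m" using k(1) by auto
  then have off: "off2 k = off1 k" using off_0 off_m by auto
  obtain e' x' where w: "e' \<in> edges G1" "(src G1 e' = cv k \<and> x' = 0) \<or> (tgt G1 e' = cv k \<and> x' = len G1 e')"
     "phi e' x' = Wf lam phi (off1 k)" using witness_end[OF kk] by blast
  have "phi e' x' = phi e2 x2"
    by (rule ef_cont[OF ef v w(1) e2(1)]) (use w(2) c2' k(2) in auto)
  then show ?thesis using k(3) off w(3) T_rest[OF e2(2)] by simp
qed

lemma T_cont:
  assumes v: "v \<in> verts G2" and e1: "e1 \<in> edges G2" and e2: "e2 \<in> edges G2"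
    and c1: "(src G2 e1 = v \<and> x1 = 0) \<or> (tgt G2 e1 = v \<and> x1 = len G2 e1)"
    and c2: "(src G2 e2 = v \<and> x2 = 0) \<or> (tgt G2 e2 = v \<and> x2 = len G2 e2)"
  shows "T lam phi e1 x1 = T lam phi e2 x2"
proof -
  have v1: "v \<in> verts G1" and e1': "e1 \<in> edges G1" and e2': "e2 \<in> edges G1"
    using v e1 e2 verts_eq edges_eq by auto
  have c1': "(src G1 e1 = v \<and> x1 = 0) \<or> (tgt G1 e1 = v \<and> x1 = len G2 e1)" using c1 src_eq tgt_eq by simp
  have c2': "(src G1 e2 = v \<and> x2 = 0) \<or> (tgt G1 e2 = v \<and> x2 = len G2 e2)" using c2 src_eq tgt_eq by simp
  show ?thesis
  proof (cases "e1 \<in> CE")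
    case True
    show ?thesis
    proof (cases "e2 \<in> CE")
      case True2: True
      obtain k1 where k1: "k1 \<le> m" "v = cv k1" "T lam phi e1 x1 = Wf lam phi (off2 k1)"
        using chain_end2[OF True c1'] by blast
      obtain k2 where k2: "k2 \<le> m" "v = cv k2" "T lam phi e2 x2 = Wf lam phi (off2 k2)"
        using chain_end2[OF True2 c2'] by blast
      have "k1 = k2" using k1 k2 cv_eq by auto
      then show ?thesis using k1 k2 by simp
    next
      case False
      show ?thesis by (rule cont_mixed[OF v1 True e2' False c1' c2'])
    qed
  next
    case False
    show ?thesis
    proof (cases "e2 \<in> CE")
      case True
      show ?thesis by (rule cont_mixed[OF v1 True e1' False c2' c1', symmetric])
    next
      case False2: False
      have l1: "len G2 e1 = len G1 e1" using len_rest[OF e1'] False by (simp add: CE_def CE0_def)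
      have l2: "len G2 e2 = len G1 e2" using len_rest[OF e2'] False2 by (simp add: CE_def CE0_def)
      have "phi e1 x1 = phi e2 x2"
        by (rule ef_cont[OF ef v1 e1' e2']) (use c1' c2' l1 l2 in auto)
      then show ?thesis using T_rest[OF False] T_rest[OF False2] by simp
    qed
  qed
qed


lemma sum_row: "k < m \<Longrightarrow> (\<Sum>e\<in>(\<lambda>j. ce (k, j)) ` {..<d}. f e) = (\<Sum>j<d. f (ce (k, j)))"
  using sum.reindex[OF inj_row[of k], of f] by (simp add: o_def)

lemma sum_split: "(\<Sum>e\<in>{e\<in>edges G1. P e}. f e) = (\<Sum>e\<in>{e\<in>edges G1. P e \<and> e \<notin> CE}. f e) + (\<Sum>e\<in>{e\<in>CE. P e}. f e)"
proof -
  have eq: "{e\<in>edges G1. P e} = {e\<in>edges G1. P e \<and> e \<notin> CE} \<union> {e\<in>CE. P e}" using CE_sub by auto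
  have f1: "finite {e\<in>edges G1. P e \<and> e \<notin> CE}" using fin_edges by simp
  have f2: "finite {e\<in>CE. P e}" using fin_edges CE_sub by (auto intro: finite_subset)
  show ?thesis unfolding eq by (rule sum.union_disjoint[OF f1 f2]) auto
qed

lemma mean'_sum: "(\<Sum>j<d. Dv G1 lam phi (ce (r, j)) x) = real d * mean' lam phi r x"
  using d_real_pos by (simp add: mean'_def)

lemma CS1: "k < m \<Longrightarrow> (\<Sum>e\<in>{e\<in>CE. src G1 e = cv k}. vector_derivative (phi e) (at 0 within {0..len G1 e}))
   = real d * Wf' lam phi (off1 k)"
proof -
  assume k: "k < m"
  have "(\<Sum>e\<in>{e\<in>CE. src G1 e = cv k}. vector_derivative (phi e) (at 0 within {0..len G1 e}))
      = (\<Sum>j<d. vector_derivative (phi (ce (k, j))) (at 0 within {0..len G1 (ce (k, j))}))"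
    unfolding csrc[OF k] by (rule sum_row[OF k])
  also have "\<dots> = (\<Sum>j<d. Dv G1 lam phi (ce (k, j)) 0)" by (intro sum.cong refl vd_ce0 k) simp
  also have "\<dots> = real d * mean' lam phi k 0" by (rule mean'_sum)
  also have "mean' lam phi k 0 = Wf' lam phi (off1 k)"
    using mean_W[OF k] l1_pos[OF k] by force
  finally show ?thesis .
qed

lemma CT1: "0 < k \<Longrightarrow> k \<le> m \<Longrightarrow> (\<Sum>e\<in>{e\<in>CE. tgt G1 e = cv k}. vector_derivative (phi e) (at (len G1 e) within {0..len G1 e}))
   = real d * Wf' lam phi (off1 k)"
proof -
  assume k: "0 < k" "k \<le> m"
  define q where "q = k - 1"
  have q: "q < m" "Suc q = k" using k by (auto simp: q_def)
  have "(\<Sum>e\<in>{e\<in>CE. tgt G1 e = cv k}. vector_derivative (phi e) (at (len G1 e) within {0..len G1 e}))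
      = (\<Sum>j<d. vector_derivative (phi (ce (q, j))) (at (len G1 (ce (q, j))) within {0..len G1 (ce (q, j))}))"
    unfolding ctgt[OF k] q_def[symmetric] by (rule sum_row[OF q(1)])
  also have "\<dots> = (\<Sum>j<d. Dv G1 lam phi (ce (q, j)) (l (\<sigma> q)))" by (intro sum.cong refl vd_ce1 q) simp
  also have "\<dots> = real d * mean' lam phi q (l (\<sigma> q))" by (rule mean'_sum)
  also have "mean' lam phi q (l (\<sigma> q)) = Wf' lam phi (off1 q + l (\<sigma> q))"
    using mean_W[OF q(1)] l1_pos[OF q(1)] by force
  also have "off1 q + l (\<sigma> q) = off1 k" by (simp add: q(2)[symmetric] off1_Suc)
  finally show ?thesis .
qed

lemma TD_sum: "p < m \<Longrightarrow> (\<Sum>j<d. TD lam phi p j x) = real d * Wf' lam phi (off2 p + x)"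
proof -
  have "(\<Sum>j<d. TD lam phi p j x) = (\<Sum>j<d. Dv G1 lam phi (ce (rp p, j)) x) - real d * mean' lam phi (rp p) x
     + real d * Wf' lam phi (off2 p + x)"
    by (simp add: TD_def sum.distrib sum_subtractf)
  then show ?thesis by (simp add: mean'_sum)
qed

lemma vd_T0: "p < m \<Longrightarrow> j < d \<Longrightarrow>
   vector_derivative (T lam phi (ce (p, j))) (at 0 within {0..len G2 (ce (p, j))}) = TD lam phi p j 0"
  using vd_eval[OF l2_pos, of p 0] T_deriv(1)[of p j 0] len2 l2_pos[of p] by auto

lemma vd_T1: "p < m \<Longrightarrow> j < d \<Longrightarrow>
   vector_derivative (T lam phi (ce (p, j))) (at (len G2 (ce (p, j))) within {0..len G2 (ce (p, j))})
     = TD lam phi p j (l (\<tau> p))"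
  using vd_eval[OF l2_pos, of p "l (\<tau> p)"] T_deriv(1)[of p j "l (\<tau> p)"] len2 l2_pos[of p] by auto

lemma CS2: "k < m \<Longrightarrow> (\<Sum>e\<in>{e\<in>CE. src G1 e = cv k}. vector_derivative (T lam phi e) (at 0 within {0..len G2 e}))
   = real d * Wf' lam phi (off2 k)"
proof -
  assume k: "k < m"
  have "(\<Sum>e\<in>{e\<in>CE. src G1 e = cv k}. vector_derivative (T lam phi e) (at 0 within {0..len G2 e}))
      = (\<Sum>j<d. vector_derivative (T lam phi (ce (k, j))) (at 0 within {0..len G2 (ce (k, j))}))"
    unfolding csrc[OF k] by (rule sum_row[OF k])
  also have "\<dots> = (\<Sum>j<d. TD lam phi k j 0)" by (intro sum.cong refl vd_T0 k) simp
  also have "\<dots> = real d * Wf' lam phi (off2 k)" using TD_sum[OF k, of 0] by simp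
  finally show ?thesis .
qed

lemma CT2: "0 < k \<Longrightarrow> k \<le> m \<Longrightarrow> (\<Sum>e\<in>{e\<in>CE. tgt G1 e = cv k}. vector_derivative (T lam phi e) (at (len G2 e) within {0..len G2 e}))
   = real d * Wf' lam phi (off2 k)"
proof -
  assume k: "0 < k" "k \<le> m"
  define q where "q = k - 1"
  have q: "q < m" "Suc q = k" using k by (auto simp: q_def)
  have "(\<Sum>e\<in>{e\<in>CE. tgt G1 e = cv k}. vector_derivative (T lam phi e) (at (len G2 e) within {0..len G2 e}))
      = (\<Sum>j<d. vector_derivative (T lam phi (ce (q, j))) (at (len G2 (ce (q, j))) within {0..len G2 (ce (q, j))}))"
    unfolding ctgt[OF k] q_def[symmetric] by (rule sum_row[OF q(1)])
  also have "\<dots> = (\<Sum>j<d. TD lam phi q j (l (\<tau> q)))" by (intro sum.cong refl vd_T1 q) simp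
  also have "\<dots> = real d * Wf' lam phi (off2 q + l (\<tau> q))" by (rule TD_sum[OF q(1)])
  also have "off2 q + l (\<tau> q) = off2 k" by (simp add: q(2)[symmetric] off2_Suc)
  finally show ?thesis .
qed

lemma chain_kirch_eq:
  "(\<Sum>e\<in>{e\<in>CE. src G1 e = v}. vector_derivative (T lam phi e) (at 0 within {0..len G2 e}))
   - (\<Sum>e\<in>{e\<in>CE. tgt G1 e = v}. vector_derivative (T lam phi e) (at (len G2 e) within {0..len G2 e}))
   = (\<Sum>e\<in>{e\<in>CE. src G1 e = v}. vector_derivative (phi e) (at 0 within {0..len G1 e}))
   - (\<Sum>e\<in>{e\<in>CE. tgt G1 e = v}. vector_derivative (phi e) (at (len G1 e) within {0..len G1 e}))"
proof (cases "\<exists>k\<le>m. v = cv k")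
  case True
  then obtain k where k: "k \<le> m" "v = cv k" by blast
  consider "k = 0" | "0 < k \<and> k < m" | "k = m" using k by linarith
  then show ?thesis
  proof cases
    case 1
    have nt: "{e\<in>CE. tgt G1 e = v} = {}"
      by (rule ctgt_none) (use k 1 cv_eq in auto)
    show ?thesis unfolding nt using CS1[of 0] CS2[of 0] m_pos k 1 off_0 by simp
  next
    case 2
    show ?thesis using CS1[of k] CS2[of k] CT1[of k] CT2[of k] k 2 by simp
  next
    case 3
    have ns: "{e\<in>CE. src G1 e = v} = {}"
      by (rule csrc_none) (use k 3 cv_eq in auto)
    show ?thesis unfolding ns using CT1[of m] CT2[of m] m_pos k 3 off_m by simp
  qed
next
  case False
  have ns: "{e\<in>CE. src G1 e = v} = {}" by (rule csrc_none) (use False in auto)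
  have nt: "{e\<in>CE. tgt G1 e = v} = {}" by (rule ctgt_none) (use False in auto)
  show ?thesis unfolding ns nt by simp
qed

lemma T_kirch:
  assumes v: "v \<in> verts G2"
  shows "(\<Sum>e\<in>{e\<in>edges G2. src G2 e = v}. vector_derivative (T lam phi e) (at 0 within {0..len G2 e}))
      - (\<Sum>e\<in>{e\<in>edges G2. tgt G2 e = v}. vector_derivative (T lam phi e) (at (len G2 e) within {0..len G2 e}))
      = 0"
proof -
  have v1: "v \<in> verts G1" using v verts_eq by simp
  have rs: "(\<Sum>e\<in>{e\<in>edges G1. src G1 e = v \<and> e \<notin> CE}. vector_derivative (T lam phi e) (at 0 within {0..len G2 e}))
     = (\<Sum>e\<in>{e\<in>edges G1. src G1 e = v \<and> e \<notin> CE}. vector_derivative (phi e) (at 0 within {0..len G1 e}))"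
    by (intro sum.cong refl) (auto simp: T_rest len_rest CE_def CE0_def)
  have rt: "(\<Sum>e\<in>{e\<in>edges G1. tgt G1 e = v \<and> e \<notin> CE}. vector_derivative (T lam phi e) (at (len G2 e) within {0..len G2 e}))
     = (\<Sum>e\<in>{e\<in>edges G1. tgt G1 e = v \<and> e \<notin> CE}. vector_derivative (phi e) (at (len G1 e) within {0..len G1 e}))"
    by (intro sum.cong refl) (auto simp: T_rest len_rest CE_def CE0_def)
  have K: "(\<Sum>e\<in>{e\<in>edges G1. src G1 e = v}. vector_derivative (phi e) (at 0 within {0..len G1 e}))
      - (\<Sum>e\<in>{e\<in>edges G1. tgt G1 e = v}. vector_derivative (phi e) (at (len G1 e) within {0..len G1 e}))
      = 0" by (rule ef_kirch[OF ef v1])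
  show ?thesis
    unfolding edges_eq src_eq tgt_eq
    using K chain_kirch_eq[of v] rs rt
    unfolding sum_split[where P="\<lambda>e. src G1 e = v"] sum_split[where P="\<lambda>e. tgt G1 e = v"]
    by linarith
qed

lemma T_eigen: "eigenfunction G2 lam (T lam phi)"
  unfolding eigenfunction_def using T_ode T_cont T_kirch by blast

end

lemma T_row_sum: "p < m \<Longrightarrow> (\<Sum>j<d. T lam phi (ce (p, j)) x) = real d * Wf lam phi (off2 p + x)"
proof -
  assume p: "p < m"
  have "(\<Sum>j<d. T lam phi (ce (p, j)) x) = (\<Sum>j<d. (phi (ce (rp p, j)) x - mean phi (rp p) x) + Wf lam phi (off2 p + x))"
    by (intro sum.cong refl) (simp add: T_ce[OF p])
  also have "\<dots> = real d * Wf lam phi (off2 p + x)" by (simp add: sum.distrib sum_dev_zero)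
  finally show ?thesis .
qed

lemma T_indep:
  assumes ef: "\<forall>i<n. eigenfunction G1 lam (Phi i)" and li: "lin_indep_on G1 n Phi"
  shows "lin_indep_on G2 n (\<lambda>i. T lam (Phi i))"
  unfolding lin_indep_on_def
proof (rule allI, rule impI)
  fix c :: "nat \<Rightarrow> real"
  assume H: "\<forall>e\<in>edges G2. \<forall>x\<in>{0..len G2 e}. (\<Sum>i<n. c i * T lam (Phi i) e x) = 0"
  define a where "a = (\<Sum>i<n. c i * A0 (Phi i))"
  define b where "b = (\<Sum>i<n. c i * B0 lam (Phi i))"
  define Y where "Y t = (\<Sum>i<n. c i * Wf lam (Phi i) t)" for t
  have Yeq: "Y t = a * cf lam t + b * sf lam t" for t
    unfolding Y_def a_def b_def Wf_def
    by (simp add: distrib_left sum.distrib sum_distrib_right mult.assoc)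
  have m0: "0 < m" using m_pos by simp
  have L0: "l (\<tau> 0) > 0" using l2_pos[OF m0] .
  have Y0: "Y x = 0" if x: "x \<in> {0..l (\<tau> 0)}" for x
  proof -
    have "\<forall>j<d. (\<Sum>i<n. c i * T lam (Phi i) (ce (0, j)) x) = 0"
      using H ce_in[OF m0] edges_eq len2[OF m0] x by auto
    then have "0 = (\<Sum>j<d. \<Sum>i<n. c i * T lam (Phi i) (ce (0, j)) x)" by simp
    also have "\<dots> = (\<Sum>i<n. c i * (\<Sum>j<d. T lam (Phi i) (ce (0, j)) x))"
      by (subst sum.swap) (simp add: sum_distrib_left)
    also have "\<dots> = (\<Sum>i<n. c i * (real d * Wf lam (Phi i) (off2 0 + x)))"
      by (simp add: T_row_sum[OF m0])
    also have "\<dots> = real d * Y x" by (simp add: Y_def off_0 sum_distrib_left mult.left_commute)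
    finally show ?thesis using d_real_pos by simp
  qed
  have a0: "a = 0" using Y0[of 0] L0 Yeq[of 0] by simp
  have b0: "b = 0"
  proof -
    have d1: "((\<lambda>t. a * cf lam (0 + t) + b * sf lam (0 + t)) has_real_derivative
        (- lam * a * sf lam (0 + 0) + b * cf lam (0 + 0))) (at 0 within {0..l (\<tau> 0)})"
      by (rule W_shift1)
    have d2: "((\<lambda>t. 0) has_real_derivative b) (at 0 within {0..l (\<tau> 0)})"
    proof (rule has_field_derivative_transform_within[OF _ zero_less_one])
      show "((\<lambda>t. a * cf lam (0 + t) + b * sf lam (0 + t)) has_real_derivative b) (at 0 within {0..l (\<tau> 0)})"
        using d1 by simp
      show "0 \<in> {0..l (\<tau> 0)}" using L0 by simp
      fix x assume "x \<in> {0..l (\<tau> 0)}"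
      then show "a * cf lam (0 + x) + b * sf lam (0 + x) = 0" using Y0 Yeq by simp
    qed
    have d3: "((\<lambda>t. 0::real) has_real_derivative 0) (at 0 within {0..l (\<tau> 0)})" by simp
    have "vector_derivative (\<lambda>t. 0::real) (at 0 within {0..l (\<tau> 0)}) = b"
      by (rule vd_eval[OF L0 _ d2]) (use L0 in simp)
    moreover have "vector_derivative (\<lambda>t. 0::real) (at 0 within {0..l (\<tau> 0)}) = 0"
      by (rule vd_eval[OF L0 _ d3]) (use L0 in simp)
    ultimately show ?thesis by simp
  qed
  have Yz: "Y t = 0" for t using Yeq a0 b0 by simp
  have Z: "\<forall>e\<in>edges G1. \<forall>x\<in>{0..len G1 e}. (\<Sum>i<n. c i * Phi i e x) = 0"
  proof (intro ballI)
    fix e x assume e: "e \<in> edges G1" and x: "x \<in> {0..len G1 e}"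
    show "(\<Sum>i<n. c i * Phi i e x) = 0"
    proof (cases "e \<in> CE")
      case False
      have l2: "len G2 e = len G1 e" using len_rest[OF e] False by (simp add: CE_def CE0_def)
      show ?thesis using H e x l2 edges_eq T_rest[OF False] by auto
    next
      case True
      then obtain r j where rj: "r < m" "j < d" "e = ce (r, j)" by (auto simp: CE_def CE0_def)
      define p where "p = inv \<tau> (\<sigma> r)"
      have p: "rp p = r" "p < m" using rp_surj[OF rj(1)] by (auto simp: p_def)
      have lp: "l (\<tau> p) = l (\<sigma> r)" using sig_rp[of p] p by simp
      have x': "x \<in> {0..l (\<sigma> r)}" using x rj len1 by simp
      have "(\<Sum>i<n. c i * T lam (Phi i) (ce (p, j)) x) = 0"
        using H ce_in[OF p(2) rj(2)] edges_eq len2[OF p(2) rj(2)] lp x' by auto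
      then have "0 = (\<Sum>i<n. c i * (Phi i (ce (r, j)) x - mean (Phi i) r x + Wf lam (Phi i) (off2 p + x)))"
        by (simp add: T_ce[OF p(2) rj(2)] p(1))
      also have "\<dots> = (\<Sum>i<n. c i * Phi i (ce (r, j)) x) - (\<Sum>i<n. c i * mean (Phi i) r x) + Y (off2 p + x)"
        by (simp add: Y_def distrib_left right_diff_distrib sum.distrib sum_subtractf)
      also have "(\<Sum>i<n. c i * mean (Phi i) r x) = (\<Sum>i<n. c i * Wf lam (Phi i) (off1 r + x))"
      proof (intro sum.cong refl)
        fix i assume "i \<in> {..<n}"
        then have efi: "eigenfunction G1 lam (Phi i)" using ef by simp
        show "c i * mean (Phi i) r x = c i * Wf lam (Phi i) (off1 r + x)"
          using mean_W[OF efi rj(1)] x' by simp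
      qed
      also have "\<dots> = Y (off1 r + x)" by (simp add: Y_def)
      finally show ?thesis using Yz rj(3) by simp
    qed
  qed
  then show "\<forall>i<n. c i = 0" using li unfolding lin_indep_on_def by blast
qed

lemma eig_mult_le: "eig_mult G1 lam \<le> eig_mult G2 lam"
  unfolding eig_mult_def
proof (rule Sup_subset_mono, rule subsetI)
  fix z assume "z \<in> {enat n |n. \<exists>Phi. (\<forall>i<n. eigenfunction G1 lam (Phi i)) \<and> lin_indep_on G1 n Phi}"
  then obtain n Phi where z: "z = enat n" and ef: "\<forall>i<n. eigenfunction G1 lam (Phi i)" and li: "lin_indep_on G1 n Phi"
    by blast
  have 1: "\<forall>i<n. eigenfunction G2 lam (T lam (Phi i))" using ef T_eigen by blast
  have 2: "lin_indep_on G2 n (\<lambda>i. T lam (Phi i))" by (rule T_indep[OF ef li])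
  have "\<exists>Psi. (\<forall>i<n. eigenfunction G2 lam (Psi i)) \<and> lin_indep_on G2 n Psi"
    by (rule exI[of _ "\<lambda>i. T lam (Phi i)"]) (use 1 2 in simp)
  then show "z \<in> {enat n |n. \<exists>Phi. (\<forall>i<n. eigenfunction G2 lam (Phi i)) \<and> lin_indep_on G2 n Phi}"
    using z by blast
qed

end

lemma chain_setup_swap:
  assumes "chain_setup G1 G2 ce cv d m l \<sigma> \<tau>"
  shows "chain_setup G2 G1 ce cv d m l \<tau> \<sigma>"
proof -
  interpret chain_setup G1 G2 ce cv d m l \<sigma> \<tau> by (rule assms)
  show ?thesis
    apply unfold_locales
    using d_pos m_pos l_pos sig tau verts_eq edges_eq src_eq tgt_eq fin_edges ce_in ce_inj ce_src ce_tgt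
      len1 len2 len_rest cv_inj rest_interior cv_verts
    by (auto simp: edges_eq src_eq tgt_eq verts_eq)
qed

lemma chain_iso:
  assumes "chain_setup G1 G2 ce cv d m l \<sigma> \<tau>"
  shows "isospectral G1 G2"
proof -
  interpret A: chain_setup G1 G2 ce cv d m l \<sigma> \<tau> by (rule assms)
  interpret B: chain_setup G2 G1 ce cv d m l \<tau> \<sigma> by (rule chain_setup_swap[OF assms])
  show ?thesis unfolding isospectral_def using A.eig_mult_le B.eig_mult_le by (metis antisym)
qed


lemma pc_setup:
  assumes "d \<ge> 1" "m \<ge> 1" "\<forall>i<m. l i > 0" "\<sigma> permutes {..<m}" "\<tau> permutes {..<m}"
  shows "chain_setup (pumpkin_chain d l m \<sigma>) (pumpkin_chain d l m \<tau>) id id d m l \<sigma> \<tau>"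
proof -
  have fin: "finite {(i, j). i < m \<and> j < d}"
    by (rule finite_subset[of _ "{..<m} \<times> {..<d}"]) auto
  show ?thesis
    by unfold_locales (use assms fin in \<open>auto simp: pumpkin_chain_def\<close>)
qed

lemma g2_setup:
  fixes G :: "('v, 'e) mgraph" and H :: "('w, 'f) mgraph"
  assumes "d \<ge> 1" "m \<ge> 1" "\<forall>i<m. l i > 0" "\<sigma> permutes {..<m}" "\<tau> permutes {..<m}"
    and "wf_mgraph G" "wf_mgraph H" "g \<in> verts G" "h \<in> verts H"
  shows "chain_setup (glue_two G g H h m (pumpkin_chain d l m \<sigma>)) (glue_two G g H h m (pumpkin_chain d l m \<tau>))
     (\<lambda>ij. Inr (Inr ij)) (\<lambda>k. if k = 0 then Inl g else if k = m then Inr (Inl h) else Inr (Inr k)) d m l \<sigma> \<tau>"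
proof -
  have fin: "finite {(i, j). i < m \<and> j < d}"
    by (rule finite_subset[of _ "{..<m} \<times> {..<d}"]) auto
  have fG: "finite (edges G)" "finite (edges H)" using assms(6,7) by (auto simp: wf_mgraph_def)
  show ?thesis
    by unfold_locales
      (use assms fin fG in \<open>auto simp: glue_two_def Let_def pumpkin_chain_def inj_on_def split: if_splits\<close>)
qed

lemma g1_setup:
  fixes G :: "('v, 'e) mgraph"
  assumes "d \<ge> 1" "m \<ge> 1" "\<forall>i<m. l i > 0" "\<sigma> permutes {..<m}" "\<tau> permutes {..<m}"
    and "wf_mgraph G" "g1 \<in> verts G" "g2 \<in> verts G" "g1 \<noteq> g2"
  shows "chain_setup (glue_one G g1 g2 m (pumpkin_chain d l m \<sigma>)) (glue_one G g1 g2 m (pumpkin_chain d l m \<tau>))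
     (\<lambda>ij. Inr ij) (\<lambda>k. if k = 0 then Inl g1 else if k = m then Inl g2 else Inr k) d m l \<sigma> \<tau>"
proof -
  have fin: "finite {(i, j). i < m \<and> j < d}"
    by (rule finite_subset[of _ "{..<m} \<times> {..<d}"]) auto
  have fG: "finite (edges G)" using assms(6) by (auto simp: wf_mgraph_def)
  show ?thesis
    by unfold_locales
      (use assms fin fG in \<open>auto simp: glue_one_def Let_def pumpkin_chain_def inj_on_def split: if_splits\<close>)
qed

theorem theorem2:
  fixes d m :: nat and l :: "nat \<Rightarrow> real" and \<sigma> \<tau> :: "nat \<Rightarrow> nat"
  assumes "d \<ge> 2" and "m \<ge> 1"
    and "\<forall>i<m. l i > 0"
    and "\<sigma> permutes {..<m}" and "\<tau> permutes {..<m}"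
  shows "isospectral (pumpkin_chain d l m \<sigma>) (pumpkin_chain d l m \<tau>) \<and>
    (\<forall>(G :: ('v, 'e) mgraph) (H :: ('w, 'f) mgraph) g h.
       wf_mgraph G \<longrightarrow> wf_mgraph H \<longrightarrow> g \<in> verts G \<longrightarrow> h \<in> verts H \<longrightarrow>
       isospectral (glue_two G g H h m (pumpkin_chain d l m \<sigma>))
                   (glue_two G g H h m (pumpkin_chain d l m \<tau>))) \<and>
    (\<forall>(G :: ('u, 'a) mgraph) g1 g2.
       wf_mgraph G \<longrightarrow> g1 \<in> verts G \<longrightarrow> g2 \<in> verts G \<longrightarrow> g1 \<noteq> g2 \<longrightarrow>
       isospectral (glue_one G g1 g2 m (pumpkin_chain d l m \<sigma>))
                   (glue_one G g1 g2 m (pumpkin_chain d l m \<tau>)))"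
proof -
  have d1: "d \<ge> 1" using assms(1) by simp
  show ?thesis
  proof (intro conjI allI impI)
    show "isospectral (pumpkin_chain d l m \<sigma>) (pumpkin_chain d l m \<tau>)"
      by (rule chain_iso[OF pc_setup[OF d1 assms(2-5)]])
  next
    fix G :: "('v, 'e) mgraph" and H :: "('w, 'f) mgraph" and g h
    assume "wf_mgraph G" "wf_mgraph H" "g \<in> verts G" "h \<in> verts H"
    then show "isospectral (glue_two G g H h m (pumpkin_chain d l m \<sigma>))
                   (glue_two G g H h m (pumpkin_chain d l m \<tau>))"
      by (intro chain_iso[OF g2_setup[OF d1 assms(2-5)]])
  next
    fix G :: "('u, 'a) mgraph" and g1 g2
    assume "wf_mgraph G" "g1 \<in> verts G" "g2 \<in> verts G" "g1 \<noteq> g2"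
    then show "isospectral (glue_one G g1 g2 m (pumpkin_chain d l m \<sigma>))
                   (glue_one G g1 g2 m (pumpkin_chain d l m \<tau>))"
      by (intro chain_iso[OF g1_setup[OF d1 assms(2-5)]])
  qed
qed

end
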